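(* Let $G$ be a group, $g,h,c\in G$, and $k=|G:C_G(h)|$, assumed finite. If the set $\{x\in G:[x,g,h]=c\}$ is $2k$-large in $G$, then $[a,g,h]=1$ for all $a\in G$. Similarly, if $c\in Z(G)$ and the set $\{x\in G:[g,x,h]=c\}$ is $2k$-large in $G$, then $[g,a,h]=1$ for all $a\in G$.
   Context: $[a,b]=a^{-1}b^{-1}ab$ and $[a,b,d]=[[a,b],d]$. A subset $X\subseteq G$ is $k$-large in $G$ if the intersection of any $k$ left translates $a_1X\cap\dots\cap a_kX$ ($a_i\in G$) is non-empty. *)

theory Defs
  imports "HOL-Algebra.Algebra"
begin

definition comm :: "('a, 'b) monoid_scheme \<Rightarrow> 'a \<Rightarrow> 'a \<Rightarrow> 'a" where
  "comm G a b = inv\<^bsub>G\<^esub> a \<otimes>\<^bsub>G\<^esub> inv\<^bsub>G\<^esub> b \<otimes>\<^bsub>G\<^esub> a \<otimes>\<^bsub>G\<^esub> b"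

definition comm3 :: "('a, 'b) monoid_scheme \<Rightarrow> 'a \<Rightarrow> 'a \<Rightarrow> 'a \<Rightarrow> 'a" where
  "comm3 G a b d = comm G (comm G a b) d"

definition centralizer :: "('a, 'b) monoid_scheme \<Rightarrow> 'a \<Rightarrow> 'a set" where
  "centralizer G h = {x \<in> carrier G. x \<otimes>\<^bsub>G\<^esub> h = h \<otimes>\<^bsub>G\<^esub> x}"

definition center :: "('a, 'b) monoid_scheme \<Rightarrow> 'a set" where
  "center G = {z \<in> carrier G. \<forall>y \<in> carrier G. z \<otimes>\<^bsub>G\<^esub> y = y \<otimes>\<^bsub>G\<^esub> z}"

definition large :: "('a, 'b) monoid_scheme \<Rightarrow> nat \<Rightarrow> 'a set \<Rightarrow> bool" where
  "large G k S \<longleftrightarrow>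
     (\<forall>a. (\<forall>i<k. a i \<in> carrier G) \<longrightarrow> \<Inter>((\<lambda>i. l_coset G (a i) S) ` lessThan k) \<noteq> {})"

end

theory Submission
  imports Defs
begin

context group
begin

lemma cancel1[simp]: "x \<in> carrier G \<Longrightarrow> y \<in> carrier G \<Longrightarrow> x \<otimes> (inv x \<otimes> y) = y"
  by (simp add: m_assoc[symmetric])

lemma cancel2[simp]: "x \<in> carrier G \<Longrightarrow> y \<in> carrier G \<Longrightarrow> inv x \<otimes> (x \<otimes> y) = y"
  by (simp add: m_assoc[symmetric])

lemma inv_mult_one_iff: "a \<in> carrier G \<Longrightarrow> b \<in> carrier G \<Longrightarrow> (inv a \<otimes> b = \<one>) = (a = b)"
proof
  assume a: "a \<in> carrier G" and b: "b \<in> carrier G" and e: "inv a \<otimes> b = \<one>"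
  have "a \<otimes> (inv a \<otimes> b) = a" using e a by simp
  then show "a = b" using a b by simp
qed simp

lemma comm_closed[simp]: "a \<in> carrier G \<Longrightarrow> b \<in> carrier G \<Longrightarrow> comm G a b \<in> carrier G"
  by (simp add: comm_def)

lemma comm_inv: "x \<in> carrier G \<Longrightarrow> g \<in> carrier G \<Longrightarrow> inv (comm G x g) = comm G g x"
  by (simp add: comm_def inv_mult_group m_assoc)

lemma comm_mult: "x \<in> carrier G \<Longrightarrow> p \<in> carrier G \<Longrightarrow> g \<in> carrier G \<Longrightarrow>
   comm G (x \<otimes> p) g = inv p \<otimes> comm G x g \<otimes> p \<otimes> comm G p g"
  by (simp add: comm_def inv_mult_group m_assoc)

lemma centralizer_subgroup: "h \<in> carrier G \<Longrightarrow> subgroup (centralizer G h) G"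
proof (rule subgroupI)
  assume h: "h \<in> carrier G"
  show "centralizer G h \<subseteq> carrier G" by (auto simp: centralizer_def)
  show "centralizer G h \<noteq> {}" using h by (auto simp: centralizer_def intro!: exI[of _ \<one>])
  fix a b assume a: "a \<in> centralizer G h" and b: "b \<in> centralizer G h"
  then have ac: "a \<in> carrier G" and ah: "a \<otimes> h = h \<otimes> a" and bc: "b \<in> carrier G" and bh: "b \<otimes> h = h \<otimes> b"
    by (auto simp: centralizer_def)
  have "inv a \<otimes> h = inv a \<otimes> h \<otimes> a \<otimes> inv a" using ac h by (simp add: m_assoc)
  also have "\<dots> = inv a \<otimes> (a \<otimes> h) \<otimes> inv a" using ac h ah by (simp add: m_assoc)
  also have "\<dots> = h \<otimes> inv a" using ac h by (simp add: m_assoc[symmetric])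
  finally show "inv a \<in> centralizer G h" using ac by (simp add: centralizer_def)
  have "a \<otimes> b \<otimes> h = a \<otimes> (h \<otimes> b)" using ac bc h bh by (simp add: m_assoc)
  also have "\<dots> = h \<otimes> a \<otimes> b" using ac bc h ah by (simp add: m_assoc[symmetric])
  finally show "a \<otimes> b \<in> centralizer G h" using ac bc h by (simp add: centralizer_def m_assoc)
qed

lemma comm_one_iff: "y \<in> carrier G \<Longrightarrow> h \<in> carrier G \<Longrightarrow> (comm G y h = \<one>) = (y \<in> centralizer G h)"
proof -
  assume y: "y \<in> carrier G" and h: "h \<in> carrier G"
  have "comm G y h = inv (h \<otimes> y) \<otimes> (y \<otimes> h)"
    using y h by (simp add: comm_def inv_mult_group m_assoc)
  then have "(comm G y h = \<one>) = (h \<otimes> y = y \<otimes> h)"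
    using y h inv_mult_one_iff by simp
  then show ?thesis using y by (auto simp: centralizer_def)
qed

lemma comm_eq_centralizer:
  assumes y1: "y1 \<in> carrier G" and y2: "y2 \<in> carrier G" and h: "h \<in> carrier G"
    and e: "comm G y1 h = comm G y2 h"
  shows "y2 \<otimes> inv y1 \<in> centralizer G h"
proof -
  have "inv y1 \<otimes> inv h \<otimes> y1 = inv y2 \<otimes> inv h \<otimes> y2"
    using e y1 y2 h unfolding comm_def by (metis inv_closed m_closed r_cancel)
  note E = this
  have "y2 \<otimes> inv y1 \<otimes> inv h = y2 \<otimes> (inv y1 \<otimes> inv h \<otimes> y1) \<otimes> inv y1"
    using y1 y2 h by (simp add: m_assoc)
  also have "\<dots> = y2 \<otimes> (inv y2 \<otimes> inv h \<otimes> y2) \<otimes> inv y1" using E by simp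
  also have "\<dots> = inv h \<otimes> (y2 \<otimes> inv y1)" using y1 y2 h by (simp add: m_assoc)
  finally have e2: "y2 \<otimes> inv y1 \<otimes> inv h = inv h \<otimes> (y2 \<otimes> inv y1)" .
  define w where "w = y2 \<otimes> inv y1"
  have w: "w \<in> carrier G" using y1 y2 by (simp add: w_def)
  have "h \<otimes> w = h \<otimes> (w \<otimes> inv h) \<otimes> h" using w h by (simp add: m_assoc)
  also have "\<dots> = h \<otimes> (inv h \<otimes> w) \<otimes> h" using e2 by (simp add: w_def)
  also have "\<dots> = w \<otimes> h" using w h by (simp add: m_assoc[symmetric])
  finally show ?thesis using w by (simp add: centralizer_def w_def)
qed

lemma comm_inv_left: "y \<in> carrier G \<Longrightarrow> h \<in> carrier G \<Longrightarrow>
   comm G (inv y) h = y \<otimes> inv (comm G y h) \<otimes> inv y"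
  by (simp add: comm_def inv_mult_group m_assoc)

lemma main_part:
  fixes g h c :: 'a and k :: nat
  assumes g: "g \<in> carrier G" and h: "h \<in> carrier G"
    and fin: "finite (rcosets\<^bsub>G\<^esub> (centralizer G h))"
    and kdef: "k = card (rcosets\<^bsub>G\<^esub> (centralizer G h))"
    and L: "large G (2 * k) {x \<in> carrier G. comm3 G x g h = c}"
  shows "\<forall>a \<in> carrier G. comm3 G a g h = \<one>\<^bsub>G\<^esub>"
proof
  let ?H = "centralizer G h"
  let ?S = "{x \<in> carrier G. comm3 G x g h = c}"
  have sub: "subgroup ?H G" by (rule centralizer_subgroup[OF h])
  fix x assume x: "x \<in> carrier G"
  obtain f where f: "bij_betw f {0..<k} (rcosets ?H)"
    using ex_bij_betw_nat_finite[OF fin] kdef by blast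
  have "\<forall>i<k. \<exists>r \<in> carrier G. f i = ?H #> r"
  proof (intro allI impI)
    fix i assume "i < k"
    then have "f i \<in> rcosets ?H" using f unfolding bij_betw_def by auto
    then show "\<exists>r \<in> carrier G. f i = ?H #> r" unfolding RCOSETS_def by blast
  qed
  then obtain rep where rep: "\<And>i. i < k \<Longrightarrow> rep i \<in> carrier G \<and> f i = ?H #> rep i"
    by metis
  define a where "a i = (if i < k then inv (rep i) else inv (rep (i - k)) \<otimes> inv x)" for i
  have "\<forall>i<2*k. a i \<in> carrier G" using rep x by (auto simp: a_def)
  with L obtain z where z: "z \<in> (\<Inter>i\<in>{..<2*k}. l_coset G (a i) ?S)"
    unfolding large_def by blast
  have zc: "z \<in> carrier G"
  proof -
    have "k > 0"
    proof -
      have "?H #> \<one> \<in> rcosets ?H" unfolding RCOSETS_def by blast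
      then show ?thesis using fin kdef card_gt_0_iff by blast
    qed
    then have "z \<in> l_coset G (a 0) ?S" using z by auto
    then show ?thesis using rep \<open>k > 0\<close> by (auto simp: l_coset_def a_def)
  qed
  have "?H #> inv z \<in> rcosets ?H" using zc unfolding RCOSETS_def by blast
  then obtain j where j: "j < k" "f j = ?H #> inv z" using f unfolding bij_betw_def
    by (metis atLeastLessThan_iff imageE)
  have "inv z \<in> ?H #> rep j" using j rep[OF j(1)] rcos_self[OF inv_closed[OF zc] sub]
    by simp
  then obtain h0 where h0: "h0 \<in> ?H" "inv z = h0 \<otimes> rep j" unfolding r_coset_def by auto
  define p where "p = rep j \<otimes> z"
  have rj: "rep j \<in> carrier G" using rep j by auto
  have h0c: "h0 \<in> carrier G" using subgroup.mem_carrier[OF sub h0(1)] .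
  have "p = inv h0"
  proof -
    have "z = inv (inv z)" using zc by simp
    also have "\<dots> = inv (h0 \<otimes> rep j)" using h0 by simp
    finally have "z = inv (h0 \<otimes> rep j)" .
    then show ?thesis unfolding p_def using h0c rj by (simp add: inv_mult_group m_assoc)
  qed
  then have pH: "p \<in> ?H" using subgroup.m_inv_closed[OF sub h0(1)] by simp
  have pc: "p \<in> carrier G" using rj zc by (simp add: p_def)
  have "z \<in> l_coset G (a j) ?S" using z j by auto
  then obtain s1 where s1: "s1 \<in> ?S" "z = inv (rep j) \<otimes> s1" using j by (auto simp: l_coset_def a_def)
  have "s1 \<in> carrier G" using s1 by simp
  then have "s1 = p" using s1 rj unfolding p_def by simp
  then have pS: "comm3 G p g h = c" using s1 by simp
  have "z \<in> l_coset G (a (j + k)) ?S" using z j by auto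
  then obtain s2 where s2: "s2 \<in> ?S" "z = inv (rep j) \<otimes> inv x \<otimes> s2" using j by (auto simp: l_coset_def a_def)
  have "s2 \<in> carrier G" using s2 by simp
  then have "s2 = x \<otimes> p" using s2 rj x unfolding p_def by (simp add: m_assoc)
  then have xpS: "comm3 G (x \<otimes> p) g h = c" using s2 by simp
  have "comm G (x \<otimes> p) g \<otimes> inv (comm G p g) \<in> ?H"
    using comm_eq_centralizer[of "comm G p g" "comm G (x \<otimes> p) g" h] pS xpS pc x g h
    by (simp add: comm3_def)
  then have "inv p \<otimes> comm G x g \<otimes> p \<in> ?H"
    using comm_mult[OF x pc g] x pc g by (simp add: m_assoc)
  then have "p \<otimes> (inv p \<otimes> comm G x g \<otimes> p) \<otimes> inv p \<in> ?H"
    using pH sub by (simp add: subgroup.m_closed subgroup.m_inv_closed)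
  then have "comm G x g \<in> ?H" using pc x g by (simp add: m_assoc)
  then show "comm3 G x g h = \<one>\<^bsub>G\<^esub>" using comm_one_iff x g h by (simp add: comm3_def)
qed

end

lemma (in group) part2:
  fixes g h c :: 'a and k :: nat
  assumes g: "g \<in> carrier G" and h: "h \<in> carrier G" and cc: "c \<in> carrier G"
    and fin: "finite (rcosets\<^bsub>G\<^esub> (centralizer G h))"
    and kdef: "k = card (rcosets\<^bsub>G\<^esub> (centralizer G h))"
    and A: "c \<in> center G \<and> large G (2 * k) {x \<in> carrier G. comm3 G g x h = c}"
  shows "\<forall>a \<in> carrier G. comm3 G g a h = \<one>\<^bsub>G\<^esub>"
proof -
  have key: "comm3 G g x h = c \<longleftrightarrow> comm3 G x g h = inv c" if x: "x \<in> carrier G" for x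
  proof -
    define y where "y = comm G x g"
    have y: "y \<in> carrier G" using x assms by (simp add: y_def)
    have gx: "comm G g x = inv y" using comm_inv x assms by (simp add: y_def)
    have cz: "\<And>u. u \<in> carrier G \<Longrightarrow> c \<otimes> u = u \<otimes> c" using A by (auto simp: center_def)
    have e: "comm G (inv y) h = y \<otimes> inv (comm G y h) \<otimes> inv y" using comm_inv_left y assms by simp
    have cy: "comm G y h \<in> carrier G" using y assms by simp
    show ?thesis
    proof
      assume "comm3 G g x h = c"
      then have "y \<otimes> inv (comm G y h) \<otimes> inv y = c" using e gx by (simp add: comm3_def)
      then have "inv y \<otimes> (y \<otimes> inv (comm G y h) \<otimes> inv y) \<otimes> y = inv y \<otimes> c \<otimes> y" by simp
      also have "\<dots> = c" using cz[of y] y assms by (simp add: m_assoc)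
      finally have "inv (comm G y h) = c" using y cy by (simp add: m_assoc)
      then have "inv (inv (comm G y h)) = inv c" by simp
      then show "comm3 G x g h = inv c" using cy by (simp add: comm3_def y_def)
    next
      assume "comm3 G x g h = inv c"
      then have "inv (comm G y h) = c" using cc by (simp add: comm3_def y_def)
      then have "comm G (inv y) h = y \<otimes> c \<otimes> inv y" using e by simp
      also have "\<dots> = c" using cz[of "inv y"] y assms by (simp add: m_assoc)
      finally show "comm3 G g x h = c" using gx by (simp add: comm3_def)
    qed
  qed
  have "{x \<in> carrier G. comm3 G g x h = c} = {x \<in> carrier G. comm3 G x g h = inv c}"
    using key by blast
  then have L: "large G (2 * k) {x \<in> carrier G. comm3 G x g h = inv c}" using A by simp
  have m: "\<forall>a \<in> carrier G. comm3 G a g h = \<one>" using main_part[OF g h fin kdef L] .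
  show "\<forall>a \<in> carrier G. comm3 G g a h = \<one>\<^bsub>G\<^esub>"
  proof
    fix a assume a: "a \<in> carrier G"
    have "comm G (comm G a g) h = \<one>" using m a by (simp add: comm3_def)
    then have "comm G a g \<in> centralizer G h" using comm_one_iff[of "comm G a g" h] a g h by simp
    then have "inv (comm G a g) \<in> centralizer G h"
      by (rule subgroup.m_inv_closed[OF centralizer_subgroup[OF h]])
    then have "comm G g a \<in> centralizer G h" using comm_inv[OF a g] by simp
    then have "comm G (comm G g a) h = \<one>" using comm_one_iff[of "comm G g a" h] a g h by simp
    then show "comm3 G g a h = \<one>" by (simp add: comm3_def)
  qed
qed


theorem theorem5p11:
  fixes G :: "('a, 'b) monoid_scheme" and g h c :: 'a and k :: nat
  assumes "group G"
    and "g \<in> carrier G" and "h \<in> carrier G" and "c \<in> carrier G"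
    and "finite (rcosets\<^bsub>G\<^esub> (centralizer G h))"
    and "k = card (rcosets\<^bsub>G\<^esub> (centralizer G h))"
  shows "(large G (2 * k) {x \<in> carrier G. comm3 G x g h = c}
            \<longrightarrow> (\<forall>a \<in> carrier G. comm3 G a g h = \<one>\<^bsub>G\<^esub>))
       \<and> (c \<in> center G \<and> large G (2 * k) {x \<in> carrier G. comm3 G g x h = c}
            \<longrightarrow> (\<forall>a \<in> carrier G. comm3 G g a h = \<one>\<^bsub>G\<^esub>))"
proof (intro conjI impI)
  show "large G (2 * k) {x \<in> carrier G. comm3 G x g h = c} \<Longrightarrow>
      \<forall>a \<in> carrier G. comm3 G a g h = \<one>\<^bsub>G\<^esub>"
    by (rule group.main_part[OF assms(1,2,3,5,6)])
  show "c \<in> center G \<and> large G (2 * k) {x \<in> carrier G. comm3 G g x h = c} \<Longrightarrow>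
      \<forall>a \<in> carrier G. comm3 G g a h = \<one>\<^bsub>G\<^esub>"
    by (rule group.part2[OF assms(1,2,3,4,5,6)])
qed

end
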